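(* Let $N\ge 1$, let $q\in\mathbb C$, and let $S_N$ be the symmetric group with group algebra $\mathbb C[S_N]$, with composition convention $(\sigma_2\sigma_1)(i)=\sigma_2(\sigma_1(i))$, and let $e$ be its identity element. For a transposition $t=(A,A+1)$ of neighboring integers and $x\in\mathbb C$, let $w_{t,x}:\mathbb C[S_N]\to\mathbb C[S_N]$ be the linear operator given on $\sigma\in S_N$ by $$w_{t,x}(\sigma)=\begin{cases}(1-x)\sigma+x\,t\sigma, & \text{if } \sigma^{-1}(A)<\sigma^{-1}(A+1),\\ (1-qx)\sigma+qx\,t\sigma, & \text{if } \sigma^{-1}(A)>\sigma^{-1}(A+1).\end{cases}$$ For any transpositions of neighboring integers $t_1,\dots,t_n$ and parameters $x_1,\dots,x_n\in\mathbb C$, define coefficients $f_n(s\to\pi)$ and $\tilde f_n(s\to\pi)$, $s,\pi\in S_N$, by $$w_{t_n,x_n}\cdots w_{t_1,x_1}\, s=\sum_{\pi\in S_N} f_n(s\to\pi)\,\pi,\qquad w_{t_1,x_1}w_{t_2,x_2}\cdots w_{t_n,x_n}\, s=\sum_{\pi\in S_N}\tilde f_n(s\to\pi)\,\pi .$$ Then for every $\pi\in S_N$, $$f_n(e\to\pi)=\tilde f_n(e\to\pi^{-1}).$$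
   Context: All objects are defined in the claim; the operators are applied in opposite orders in the definitions of $f_n$ and $\tilde f_n$. *)

theory Defs
  imports "HOL-Combinatorics.Combinatorics" Complex_Main
begin

text \<open>Elements of the symmetric group S_N are the permutations of {1..N}
 (functions nat => nat fixing everything outside {1..N}); composition is
 function composition, (s2 o s1) i = s2 (s1 i). An element of the group algebra
 C[S_N] is represented by its coefficient function (nat => nat) => complex
 (only values at permutations of {1..N} are relevant).\<close>

definition perms :: "nat \<Rightarrow> (nat \<Rightarrow> nat) set" where
  "perms N = {s. s permutes {1..N}}"

definition basis_vec :: "(nat \<Rightarrow> nat) \<Rightarrow> (nat \<Rightarrow> nat) \<Rightarrow> complex" where
  "basis_vec s = (\<lambda>p. if p = s then 1 else 0)"

definition w_coeff :: "complex \<Rightarrow> nat \<Rightarrow> complex \<Rightarrow> (nat \<Rightarrow> nat) \<Rightarrow> (nat \<Rightarrow> nat) \<Rightarrow> complex" where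
  "w_coeff q A x \<sigma> \<pi> =
     (let t = Transposition.transpose A (A + 1) in
      if inv \<sigma> A < inv \<sigma> (A + 1)
      then (if \<pi> = \<sigma> then 1 - x else 0) + (if \<pi> = t \<circ> \<sigma> then x else 0)
      else (if \<pi> = \<sigma> then 1 - q * x else 0) + (if \<pi> = t \<circ> \<sigma> then q * x else 0))"

definition w_op :: "nat \<Rightarrow> complex \<Rightarrow> nat \<Rightarrow> complex \<Rightarrow> ((nat \<Rightarrow> nat) \<Rightarrow> complex) \<Rightarrow> ((nat \<Rightarrow> nat) \<Rightarrow> complex)" where
  "w_op N q A x v = (\<lambda>\<pi>. \<Sum>\<sigma>\<in>perms N. v \<sigma> * w_coeff q A x \<sigma> \<pi>)"

text \<open>ts = [(A_1,x_1),...,(A_n,x_n)], t_i = (A_i, A_i+1).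
 f_coeffs: w_{t_n,x_n} ... w_{t_1,x_1} s;  f_tilde_coeffs: w_{t_1,x_1} ... w_{t_n,x_n} s.\<close>
definition f_coeffs :: "nat \<Rightarrow> complex \<Rightarrow> (nat \<times> complex) list \<Rightarrow> (nat \<Rightarrow> nat) \<Rightarrow> (nat \<Rightarrow> nat) \<Rightarrow> complex" where
  "f_coeffs N q ts s = foldl (\<lambda>v (A, x). w_op N q A x v) (basis_vec s) ts"

definition f_tilde_coeffs :: "nat \<Rightarrow> complex \<Rightarrow> (nat \<times> complex) list \<Rightarrow> (nat \<Rightarrow> nat) \<Rightarrow> (nat \<Rightarrow> nat) \<Rightarrow> complex" where
  "f_tilde_coeffs N q ts s = foldr (\<lambda>(A, x) v. w_op N q A x v) ts (basis_vec s)"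

end

theory Submission
  imports Defs
begin

definition Lop :: "complex \<Rightarrow> nat \<Rightarrow> complex \<Rightarrow> ((nat\<Rightarrow>nat)\<Rightarrow>complex) \<Rightarrow> ((nat\<Rightarrow>nat)\<Rightarrow>complex)" where
"Lop q A x v \<pi> = v \<pi> * (if inv \<pi> A < inv \<pi> (A+1) then 1-x else 1-q*x)
  + v (Transposition.transpose A (A+1) \<circ> \<pi>) *
   (if inv (Transposition.transpose A (A+1) \<circ> \<pi>) A < inv (Transposition.transpose A (A+1) \<circ> \<pi>) (A+1) then x else q*x)"

definition Rop :: "complex \<Rightarrow> nat \<Rightarrow> complex \<Rightarrow> ((nat\<Rightarrow>nat)\<Rightarrow>complex) \<Rightarrow> ((nat\<Rightarrow>nat)\<Rightarrow>complex)" where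
"Rop q A x v \<pi> = v \<pi> * (if \<pi> A < \<pi> (A+1) then 1-x else 1-q*x)
  + v (\<pi> \<circ> Transposition.transpose A (A+1)) *
   (if (\<pi> \<circ> Transposition.transpose A (A+1)) A < (\<pi> \<circ> Transposition.transpose A (A+1)) (A+1) then x else q*x)"

lemma inv_comp_l: "bij \<pi> \<Longrightarrow> inv (Transposition.transpose a b \<circ> \<pi>) = inv \<pi> \<circ> Transposition.transpose a b"
  by (simp add: o_inv_distrib)
lemma inv_comp_r: "bij \<pi> \<Longrightarrow> inv (\<pi> \<circ> Transposition.transpose a b) = Transposition.transpose a b \<circ> inv \<pi>"
  by (simp add: o_inv_distrib)
lemma inv_comp_lr: "bij \<pi> \<Longrightarrow> inv (Transposition.transpose c d \<circ> (\<pi> \<circ> Transposition.transpose a b)) = Transposition.transpose a b \<circ> inv \<pi> \<circ> Transposition.transpose c d"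
  by (simp add: o_inv_distrib bij_comp o_assoc)

lemma tr_order: fixes C :: nat shows "a \<noteq> b \<Longrightarrow> \<not> ({a,b} = {C, C+1}) \<Longrightarrow>
   (Transposition.transpose C (C+1) a < Transposition.transpose C (C+1) b) = (a < b)"
  unfolding transpose_def doubleton_eq_iff by (auto split: if_splits)

lemma comm:
  assumes "bij \<pi>"
  shows "Lop q B x (Rop q A y v) \<pi> = Rop q A y (Lop q B x v) \<pi>"
proof -
  define s where "s = Transposition.transpose B (B+1)"
  define t where "t = Transposition.transpose A (A+1)"
  have bs: "bij (s \<circ> \<pi>)" using assms by (simp add: s_def bij_comp)
  have ia: "inv (s \<circ> \<pi>) = inv \<pi> \<circ> s" "inv (\<pi> \<circ> t) = t \<circ> inv \<pi>"
     "inv (s \<circ> (\<pi> \<circ> t)) = t \<circ> inv \<pi> \<circ> s"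
    using assms by (simp_all add: s_def t_def inv_comp_l inv_comp_r inv_comp_lr)
  have ass: "(s \<circ> \<pi>) \<circ> t = s \<circ> (\<pi> \<circ> t)" by (simp add: o_assoc)
  have inj: "inj \<pi>" "inj (inv \<pi>)" using assms bij_is_inj bij_imp_bij_inv by blast+
  have ab: "\<pi> A \<noteq> \<pi> (A+1)" using inj by (metis injD n_not_Suc_n Suc_eq_plus1)
  have cd: "inv \<pi> B \<noteq> inv \<pi> (B+1)" using inj by (metis injD n_not_Suc_n Suc_eq_plus1)
  have fi: "\<pi> (inv \<pi> z) = z" for z using assms by (simp add: bij_is_surj surj_f_inv_f)
  have LHS: "Lop q B x (Rop q A y v) \<pi> =
     (v \<pi> * (if \<pi> A < \<pi> (A+1) then 1-y else 1-q*y) + v (\<pi> \<circ> t) * (if \<pi> (A+1) < \<pi> A then y else q*y))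
       * (if inv \<pi> B < inv \<pi> (B+1) then 1-x else 1-q*x)
   + (v (s \<circ> \<pi>) * (if s (\<pi> A) < s (\<pi> (A+1)) then 1-y else 1-q*y) + v (s \<circ> (\<pi> \<circ> t)) * (if s (\<pi> (A+1)) < s (\<pi> A) then y else q*y))
       * (if inv \<pi> (B+1) < inv \<pi> B then x else q*x)"
    unfolding Lop_def Rop_def s_def[symmetric] t_def[symmetric] ia ass
    by (simp add: s_def t_def)
  have RHS: "Rop q A y (Lop q B x v) \<pi> =
     (v \<pi> * (if inv \<pi> B < inv \<pi> (B+1) then 1-x else 1-q*x) + v (s \<circ> \<pi>) * (if inv \<pi> (B+1) < inv \<pi> B then x else q*x))
       * (if \<pi> A < \<pi> (A+1) then 1-y else 1-q*y)
   + (v (\<pi> \<circ> t) * (if t (inv \<pi> B) < t (inv \<pi> (B+1)) then 1-x else 1-q*x) + v (s \<circ> (\<pi> \<circ> t)) * (if t (inv \<pi> (B+1)) < t (inv \<pi> B) then x else q*x))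
       * (if \<pi> (A+1) < \<pi> A then y else q*y)"
    unfolding Lop_def Rop_def s_def[symmetric] t_def[symmetric] ia ass
    by (simp add: s_def t_def)
  show ?thesis
  proof (cases "{\<pi> A, \<pi> (A+1)} = {B, B+1}")
    case True
    have sp: "s \<circ> \<pi> = \<pi> \<circ> t"
    proof
      fix i
      have hA: "\<pi> i = \<pi> A \<Longrightarrow> i = A" and hA1: "\<pi> i = \<pi> (A+1) \<Longrightarrow> i = A+1"
        using inj(1) by (auto dest: injD)
      show "(s \<circ> \<pi>) i = (\<pi> \<circ> t) i"
      proof (cases "i = A \<or> i = A+1")
        case True
        with \<open>{\<pi> A, \<pi> (A+1)} = {B, B+1}\<close> show ?thesis
          unfolding s_def t_def doubleton_eq_iff by auto
      next
        case False
        then have "\<pi> i \<noteq> B" "\<pi> i \<noteq> B+1"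
          using hA hA1 \<open>{\<pi> A, \<pi> (A+1)} = {B, B+1}\<close> unfolding doubleton_eq_iff by metis+
        with False show ?thesis unfolding s_def t_def by simp
      qed
    qed
    have sp2: "s \<circ> (\<pi> \<circ> t) = \<pi>" unfolding sp[symmetric] s_def by (simp add: o_assoc)
    have ifi: "inv \<pi> (\<pi> z) = z" for z using inj(1) by simp
    from True consider "\<pi> A = B" "\<pi> (A+1) = B+1" | "\<pi> A = B+1" "\<pi> (A+1) = B"
      by (auto simp: doubleton_eq_iff)
    then show ?thesis
    proof cases
      case 1
      then have "inv \<pi> B = A" "inv \<pi> (B+1) = A+1" using ifi by metis+
      with 1 show ?thesis unfolding LHS RHS sp sp2 using sp unfolding s_def t_def by (simp add: algebra_simps)
    next
      case 2
      then have "inv \<pi> B = A+1" "inv \<pi> (B+1) = A" using ifi by metis+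
      with 2 show ?thesis unfolding LHS RHS sp sp2 using sp unfolding s_def t_def by (simp add: algebra_simps)
    qed
  next
    case False
    have g2: "\<not> {inv \<pi> B, inv \<pi> (B+1)} = {A, A+1}"
    proof
      assume h: "{inv \<pi> B, inv \<pi> (B+1)} = {A, A+1}"
      then have "(inv \<pi> B = A \<and> inv \<pi> (B+1) = A+1) \<or> (inv \<pi> B = A+1 \<and> inv \<pi> (B+1) = A)"
        by (simp add: doubleton_eq_iff)
      then have "{\<pi> A, \<pi> (A+1)} = {B, B+1}" using fi[of B] fi[of "B+1"] by auto
      with False show False by simp
    qed
    have e1: "(s (\<pi> A) < s (\<pi> (A+1))) = (\<pi> A < \<pi> (A+1))" 
      unfolding s_def by (rule tr_order[OF ab False])
    have e2: "(s (\<pi> (A+1)) < s (\<pi> A)) = (\<pi> (A+1) < \<pi> A)" 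
      unfolding s_def by (rule tr_order) (use ab False in auto)
    have e3: "(t (inv \<pi> B) < t (inv \<pi> (B+1))) = (inv \<pi> B < inv \<pi> (B+1))" 
      unfolding t_def by (rule tr_order[OF cd g2])
    have e4: "(t (inv \<pi> (B+1)) < t (inv \<pi> B)) = (inv \<pi> (B+1) < inv \<pi> B)" 
      unfolding t_def by (rule tr_order) (use cd g2 in auto)
    show ?thesis unfolding LHS RHS e1 e2 e3 e4 by (simp add: algebra_simps)
  qed
qed

lemma Lop_cong: "(\<And>\<sigma>. bij \<sigma> \<Longrightarrow> v \<sigma> = w \<sigma>) \<Longrightarrow> bij \<pi> \<Longrightarrow> Lop q A x v \<pi> = Lop q A x w \<pi>"
  unfolding Lop_def by (simp add: bij_comp)
lemma Rop_cong: "(\<And>\<sigma>. bij \<sigma> \<Longrightarrow> v \<sigma> = w \<sigma>) \<Longrightarrow> bij \<pi> \<Longrightarrow> Rop q A x v \<pi> = Rop q A x w \<pi>"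
  unfolding Rop_def by (simp add: bij_comp)

lemma foldr_L_cong: "(\<And>\<sigma>. bij \<sigma> \<Longrightarrow> v \<sigma> = w \<sigma>) \<Longrightarrow> bij \<pi> \<Longrightarrow>
  foldr (\<lambda>(A, x) v. Lop q A x v) ts v \<pi> = foldr (\<lambda>(A, x) v. Lop q A x v) ts w \<pi>"
proof (induction ts arbitrary: \<pi>)
  case Nil then show ?case by simp
next
  case (Cons a ts) then show ?case by (cases a) (auto intro!: Lop_cong)
qed

lemma foldl_R_cong: "(\<And>\<sigma>. bij \<sigma> \<Longrightarrow> v \<sigma> = w \<sigma>) \<Longrightarrow> bij \<pi> \<Longrightarrow>
  foldl (\<lambda>v (A, x). Rop q A x v) v ts \<pi> = foldl (\<lambda>v (A, x). Rop q A x v) w ts \<pi>"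
proof (induction ts arbitrary: v w \<pi>)
  case Nil then show ?case by simp
next
  case (Cons a ts) show ?case 
    apply (cases a) apply simp apply (rule Cons.IH[OF _ Cons.prems(2)])
    by (auto intro!: Rop_cong Cons.prems(1))
qed

lemma R_foldr_L: "bij \<pi> \<Longrightarrow>
  Rop q A y (foldr (\<lambda>(A, x) v. Lop q A x v) ts v) \<pi> = foldr (\<lambda>(A, x) v. Lop q A x v) ts (Rop q A y v) \<pi>"
proof (induction ts arbitrary: \<pi>)
  case Nil then show ?case by simp
next
  case (Cons a ts)
  obtain B x where a: "a = (B, x)" by (cases a)
  have "Rop q A y (Lop q B x (foldr (\<lambda>(A, x) v. Lop q A x v) ts v)) \<pi>
     = Lop q B x (Rop q A y (foldr (\<lambda>(A, x) v. Lop q A x v) ts v)) \<pi>"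
    using comm[OF Cons.prems] by simp
  also have "\<dots> = Lop q B x (foldr (\<lambda>(A, x) v. Lop q A x v) ts (Rop q A y v)) \<pi>"
    by (rule Lop_cong[OF Cons.IH Cons.prems])
  finally show ?case using a by simp
qed

lemma R_L_basis: "bij \<pi> \<Longrightarrow> Rop q A y (basis_vec id) \<pi> = Lop q A y (basis_vec id) \<pi>"
proof -
  assume b: "bij \<pi>"
  define t where "t = Transposition.transpose A (A+1)"
  have tt: "t \<circ> t = id" unfolding t_def by simp
  have tn: "t \<noteq> id" unfolding t_def by (simp add: transpose_eq_id_iff)
  have e1: "(\<pi> \<circ> t = id) = (\<pi> = t)"
    by (metis comp_id o_assoc tt)
  have e2: "(t \<circ> \<pi> = id) = (\<pi> = t)"
    by (metis id_comp o_assoc tt)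
  show ?thesis
    unfolding Lop_def Rop_def t_def[symmetric] basis_vec_def e1 e2
    using tn tt by (auto simp: t_def)
qed

definition iota :: "((nat\<Rightarrow>nat)\<Rightarrow>complex) \<Rightarrow> ((nat\<Rightarrow>nat)\<Rightarrow>complex)" where
  "iota v = (\<lambda>\<pi>. v (inv \<pi>))"

lemma iota_L: "bij \<pi> \<Longrightarrow> Rop q A x (iota v) \<pi> = iota (Lop q A x v) \<pi>"
  unfolding Rop_def Lop_def iota_def
  by (simp add: inv_comp_l inv_comp_r bij_imp_bij_inv inv_inv_eq)

lemma iota_foldl: "bij \<pi> \<Longrightarrow> iota (foldl (\<lambda>v (A, x). Lop q A x v) v ts) \<pi> = foldl (\<lambda>v (A, x). Rop q A x v) (iota v) ts \<pi>"
proof (induction ts arbitrary: v \<pi>)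
  case Nil then show ?case by simp
next
  case (Cons a ts)
  obtain B x where a: "a = (B, x)" by (cases a)
  have "iota (foldl (\<lambda>v (A, x). Lop q A x v) (Lop q B x v) ts) \<pi> =
     foldl (\<lambda>v (A, x). Rop q A x v) (iota (Lop q B x v)) ts \<pi>" by (rule Cons.IH[OF Cons.prems])
  also have "\<dots> = foldl (\<lambda>v (A, x). Rop q A x v) (Rop q B x (iota v)) ts \<pi>"
    by (rule foldl_R_cong[OF _ Cons.prems]) (simp add: iota_L)
  finally show ?case using a by simp
qed

lemma iota_basis: "bij \<pi> \<Longrightarrow> iota (basis_vec id) \<pi> = basis_vec id \<pi>"
  unfolding iota_def basis_vec_def by (metis inv_id inv_inv_eq)

lemma foldl_R_foldr_L: "bij \<pi> \<Longrightarrow> foldl (\<lambda>v (A, x). Rop q A x v) (basis_vec id) ts \<pi>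
   = foldr (\<lambda>(A, x) v. Lop q A x v) ts (basis_vec id) \<pi>"
proof (induction ts arbitrary: \<pi> rule: rev_induct)
  case Nil then show ?case by simp
next
  case (snoc a ts)
  obtain B x where a: "a = (B, x)" by (cases a)
  have "Rop q B x (foldl (\<lambda>v (A, x). Rop q A x v) (basis_vec id) ts) \<pi>
      = Rop q B x (foldr (\<lambda>(A, x) v. Lop q A x v) ts (basis_vec id)) \<pi>"
    by (rule Rop_cong[OF snoc.IH snoc.prems])
  also have "\<dots> = foldr (\<lambda>(A, x) v. Lop q A x v) ts (Rop q B x (basis_vec id)) \<pi>"
    by (rule R_foldr_L[OF snoc.prems])
  also have "\<dots> = foldr (\<lambda>(A, x) v. Lop q A x v) ts (Lop q B x (basis_vec id)) \<pi>"
    by (rule foldr_L_cong[OF R_L_basis snoc.prems])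
  finally show ?case using a by (simp only: foldl_append foldr_append foldl.simps foldr.simps split comp_apply id_apply[of "basis_vec id"])
qed


lemma tp_perm: fixes A :: nat shows "1 \<le> A \<Longrightarrow> A + 1 \<le> N \<Longrightarrow> Transposition.transpose A (A+1) permutes {1..N}"
  by (rule permutes_swap_id) auto

lemma w_op_L:
  assumes A: "1 \<le> A" "A + 1 \<le> N" and p: "\<pi> \<in> perms N"
  shows "w_op N q A x v \<pi> = Lop q A x v \<pi>"
proof -
  define t where "t = Transposition.transpose A (A+1)"
  have tt: "t \<circ> t = id" unfolding t_def by simp
  have eq: "(\<pi> = t \<circ> \<sigma>) = (\<sigma> = t \<circ> \<pi>)" for \<sigma>
    by (metis comp_id id_comp o_assoc tt)
  have tp: "t \<circ> \<pi> \<in> perms N" using p tp_perm[OF A] unfolding perms_def t_def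
    by (auto intro: permutes_compose)
  have wc: "v \<sigma> * w_coeff q A x \<sigma> \<pi> =
     (if \<sigma> = \<pi> then v \<sigma> * (if inv \<sigma> A < inv \<sigma> (A + 1) then 1 - x else 1 - q * x) else 0)
   + (if \<sigma> = t \<circ> \<pi> then v \<sigma> * (if inv \<sigma> A < inv \<sigma> (A + 1) then x else q * x) else 0)" for \<sigma>
    unfolding w_coeff_def Let_def t_def[symmetric] eq by (auto simp: algebra_simps)
    have fin: "finite (perms N)" unfolding perms_def by (simp add: finite_permutations)
  show ?thesis
    unfolding w_op_def wc sum.distrib sum.delta[OF fin] using p tp
    by (simp add: Lop_def t_def)
qed

lemma Lop_cong_perms: "1 \<le> A \<Longrightarrow> A + 1 \<le> N \<Longrightarrow> (\<And>\<sigma>. \<sigma> \<in> perms N \<Longrightarrow> v \<sigma> = w \<sigma>) \<Longrightarrow> \<pi> \<in> perms N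
   \<Longrightarrow> Lop q A x v \<pi> = Lop q A x w \<pi>"
  unfolding Lop_def using tp_perm[of A N] unfolding perms_def
  by (simp add: permutes_compose)

lemma foldl_W:
  assumes "\<forall>(A, x) \<in> set ts. 1 \<le> A \<and> A + 1 \<le> N"
    and "\<And>\<sigma>. \<sigma> \<in> perms N \<Longrightarrow> v \<sigma> = w \<sigma>" and "\<pi> \<in> perms N"
  shows "foldl (\<lambda>v (A, x). w_op N q A x v) v ts \<pi> = foldl (\<lambda>v (A, x). Lop q A x v) w ts \<pi>"
  using assms
proof (induction ts arbitrary: v w \<pi>)
  case Nil then show ?case by simp
next
  case (Cons a ts)
  obtain B x where a: "a = (B, x)" by (cases a)
  have B: "1 \<le> B" "B + 1 \<le> N" using Cons.prems(1) a by auto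
  have "foldl (\<lambda>v (A, x). w_op N q A x v) (w_op N q B x v) ts \<pi> = foldl (\<lambda>v (A, x). Lop q A x v) (Lop q B x w) ts \<pi>"
  proof (rule Cons.IH)
    show "\<forall>(A, x) \<in> set ts. 1 \<le> A \<and> A + 1 \<le> N" using Cons.prems(1) by simp
    show "\<pi> \<in> perms N" by (rule Cons.prems(3))
    fix \<sigma> assume s: "\<sigma> \<in> perms N"
    show "w_op N q B x v \<sigma> = Lop q B x w \<sigma>"
      unfolding w_op_L[OF B s] by (rule Lop_cong_perms[OF B Cons.prems(2) s])
  qed
  then show ?case using a by simp
qed

lemma foldr_W:
  assumes "\<forall>(A, x) \<in> set ts. 1 \<le> A \<and> A + 1 \<le> N"
    and "\<pi> \<in> perms N"
  shows "foldr (\<lambda>(A, x) v. w_op N q A x v) ts v \<pi> = foldr (\<lambda>(A, x) v. Lop q A x v) ts v \<pi>"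
  using assms
proof (induction ts arbitrary: \<pi>)
  case Nil then show ?case by simp
next
  case (Cons a ts)
  obtain B x where a: "a = (B, x)" by (cases a)
  have B: "1 \<le> B" "B + 1 \<le> N" using Cons.prems(1) a by auto
  have "w_op N q B x (foldr (\<lambda>(A, x) v. w_op N q A x v) ts v) \<pi> = Lop q B x (foldr (\<lambda>(A, x) v. Lop q A x v) ts v) \<pi>"
    unfolding w_op_L[OF B Cons.prems(2)]
    apply (rule Lop_cong_perms[OF B _ Cons.prems(2)])
    using Cons.IH Cons.prems(1) by simp
  then show ?case using a by simp
qed

theorem theorem2p2:
  fixes N :: nat and q :: complex and ts :: "(nat \<times> complex) list" and \<pi> :: "nat \<Rightarrow> nat"
  assumes "N \<ge> 1"
    and "\<forall>(A, x) \<in> set ts. 1 \<le> A \<and> A + 1 \<le> N"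
    and "\<pi> permutes {1..N}"
  shows "f_coeffs N q ts id \<pi> = f_tilde_coeffs N q ts id (inv \<pi>)"
proof -
  have p: "\<pi> \<in> perms N" using assms(3) by (simp add: perms_def)
  have ip: "inv \<pi> \<in> perms N" using assms(3) by (simp add: perms_def permutes_inv)
  have b: "bij \<pi>" "bij (inv \<pi>)" using assms(3) permutes_bij bij_imp_bij_inv by blast+
  have "f_coeffs N q ts id \<pi> = foldl (\<lambda>v (A, x). Lop q A x v) (basis_vec id) ts \<pi>"
    unfolding f_coeffs_def by (rule foldl_W[OF assms(2) _ p]) simp
  also have "\<dots> = iota (foldl (\<lambda>v (A, x). Lop q A x v) (basis_vec id) ts) (inv \<pi>)"
    unfolding iota_def using b by (simp add: inv_inv_eq)
  also have "\<dots> = foldl (\<lambda>v (A, x). Rop q A x v) (iota (basis_vec id)) ts (inv \<pi>)"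
    by (rule iota_foldl[OF b(2)])
  also have "\<dots> = foldl (\<lambda>v (A, x). Rop q A x v) (basis_vec id) ts (inv \<pi>)"
    by (rule foldl_R_cong[OF iota_basis b(2)])
  also have "\<dots> = foldr (\<lambda>(A, x) v. Lop q A x v) ts (basis_vec id) (inv \<pi>)"
    by (rule foldl_R_foldr_L[OF b(2)])
  also have "\<dots> = f_tilde_coeffs N q ts id (inv \<pi>)"
    unfolding f_tilde_coeffs_def by (rule foldr_W[OF assms(2) ip, symmetric])
  finally show ?thesis .
qed

end
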